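(* Let $T$ be a tree with at least two vertices, rooted at a vertex $r$ of degree one, and let $V_2$ be the set of vertices labeled 2 in the labeling described in the context. Then for every dominating set $D$ of $T$, $D\leftrightarrow_{|D|+1} V_2$.
   Context: Labeling of $T$ (rooted at a degree-one vertex $r$), from the leaves upwards: every leaf other than $r$ gets label 1; every non-root internal vertex $v$, once all its children are labeled, gets label 1 if all children of $v$ have label 3, label 2 if at least one child has label 1, and label 3 otherwise; the root $r$ gets label 3 if its unique child has label 2, and label 2 otherwise. A set $D\subseteq V(T)$ is a dominating set if every vertex is in $D$ or adjacent to a vertex of $D$. Two dominating sets $D,D'$ are adjacent if $|D\triangle D'|=1$. For dominating sets $D_p,D_q$ and an integer $k>0$, write $D_p\leftrightarrow_k D_q$ if there is a sequence $D_0=D_p,\dots,D_\ell=D_q$ ($\ell\ge0$) of dominating sets of $T$ with consecutive sets adjacent and $|D_i|\le k$ for all $i$. *)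

theory Defs
  imports Main
begin

definition graph :: "'a set \<Rightarrow> ('a \<Rightarrow> 'a \<Rightarrow> bool) \<Rightarrow> bool" where
  "graph V E \<longleftrightarrow> finite V \<and> (\<forall>x y. E x y \<longrightarrow> x \<in> V \<and> y \<in> V \<and> E y x \<and> x \<noteq> y)"

definition connected_graph :: "'a set \<Rightarrow> ('a \<Rightarrow> 'a \<Rightarrow> bool) \<Rightarrow> bool" where
  "connected_graph V E \<longleftrightarrow> (\<forall>x\<in>V. \<forall>y\<in>V. E\<^sup>*\<^sup>* x y)"

definition is_cycle :: "('a \<Rightarrow> 'a \<Rightarrow> bool) \<Rightarrow> 'a list \<Rightarrow> bool" where
  "is_cycle E xs \<longleftrightarrow> length xs \<ge> 3 \<and> distinct xs \<and>
     (\<forall>i. Suc i < length xs \<longrightarrow> E (xs ! i) (xs ! Suc i)) \<and> E (last xs) (hd xs)"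

definition tree :: "'a set \<Rightarrow> ('a \<Rightarrow> 'a \<Rightarrow> bool) \<Rightarrow> bool" where
  "tree V E \<longleftrightarrow> graph V E \<and> V \<noteq> {} \<and> connected_graph V E \<and> (\<nexists>xs. is_cycle E xs)"

definition degree :: "('a \<Rightarrow> 'a \<Rightarrow> bool) \<Rightarrow> 'a \<Rightarrow> nat" where
  "degree E v = card {u. E v u}"

definition dist :: "('a \<Rightarrow> 'a \<Rightarrow> bool) \<Rightarrow> 'a \<Rightarrow> 'a \<Rightarrow> nat" where
  "dist E x y = (LEAST n. (E ^^ n) x y)"

definition child :: "('a \<Rightarrow> 'a \<Rightarrow> bool) \<Rightarrow> 'a \<Rightarrow> 'a \<Rightarrow> 'a \<Rightarrow> bool" where
  "child E r v u \<longleftrightarrow> E v u \<and> dist E r u = Suc (dist E r v)"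

definition children :: "('a \<Rightarrow> 'a \<Rightarrow> bool) \<Rightarrow> 'a \<Rightarrow> 'a \<Rightarrow> 'a set" where
  "children E r v = {u. child E r v u}"

text \<open>L is the labeling of the paper (leaves up): it satisfies the defining rules at every vertex.
  A non-root vertex without children is a leaf other than r (label 1).\<close>
definition is_labeling :: "'a set \<Rightarrow> ('a \<Rightarrow> 'a \<Rightarrow> bool) \<Rightarrow> 'a \<Rightarrow> ('a \<Rightarrow> nat) \<Rightarrow> bool" where
  "is_labeling V E r L \<longleftrightarrow>
     (\<forall>v\<in>V. v \<noteq> r \<longrightarrow>
        (children E r v = {} \<longrightarrow> L v = 1) \<and>
        (children E r v \<noteq> {} \<longrightarrow>
           L v = (if \<forall>u\<in>children E r v. L u = 3 then 1
                  else if \<exists>u\<in>children E r v. L u = 1 then 2 else 3))) \<and>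
     (\<forall>c. children E r r = {c} \<longrightarrow> L r = (if L c = 2 then 3 else 2))"

definition dominating :: "'a set \<Rightarrow> ('a \<Rightarrow> 'a \<Rightarrow> bool) \<Rightarrow> 'a set \<Rightarrow> bool" where
  "dominating V E D \<longleftrightarrow> D \<subseteq> V \<and> (\<forall>v\<in>V. v \<in> D \<or> (\<exists>u\<in>D. E u v))"

definition ds_adjacent :: "'a set \<Rightarrow> 'a set \<Rightarrow> bool" where
  "ds_adjacent D D' \<longleftrightarrow> card ((D - D') \<union> (D' - D)) = 1"

definition reconf :: "'a set \<Rightarrow> ('a \<Rightarrow> 'a \<Rightarrow> bool) \<Rightarrow> nat \<Rightarrow> 'a set \<Rightarrow> 'a set \<Rightarrow> bool" where
  "reconf V E k Dp Dq \<longleftrightarrow> (\<exists>(l::nat) (f::nat \<Rightarrow> 'a set). f 0 = Dp \<and> f l = Dq \<and>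
     (\<forall>i\<le>l. dominating V E (f i) \<and> card (f i) \<le> k) \<and>
     (\<forall>i<l. ds_adjacent (f i) (f (Suc i))))"

end

theory Submission
  imports Defs
begin

lemma dist_le: "(E ^^ n) x y \<Longrightarrow> dist E x y \<le> n"
  unfolding dist_def by (rule Least_le)

lemma dist_path: "(E ^^ n) x y \<Longrightarrow> (E ^^ dist E x y) x y"
  unfolding dist_def by (rule LeastI)

lemma dist_self: "dist E x x = 0"
  using dist_le[where E=E and n=0 and x=x and y=x] by simp

lemma dist_zero: "(E ^^ n) x y \<Longrightarrow> dist E x y = 0 \<Longrightarrow> x = y"
  using dist_path[where E=E and n=n and x=x and y=y] by simp

lemma dist_edge: "(E ^^ n) r a \<Longrightarrow> E a b \<Longrightarrow> dist E r b \<le> Suc (dist E r a)"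
  by (meson dist_le dist_path relpowp_Suc_I)

lemma shortest_path:
  assumes "(E ^^ n) r v"
  shows "\<exists>f. f 0 = r \<and> f (dist E r v) = v \<and> (\<forall>i<dist E r v. E (f i) (f (Suc i)))
            \<and> (\<forall>i\<le>dist E r v. dist E r (f i) = i)"
proof -
  define d where "d = dist E r v"
  have "(E ^^ d) r v" using dist_path[OF assms] d_def by simp
  then obtain f where f: "f 0 = r" "f d = v" "\<forall>i<d. E (f i) (f (Suc i))"
    using relpowp_fun_conv[where P=E and n=d and x=r and y=v] by auto
  have pre: "(E ^^ i) r (f i)" if "i \<le> d" for i
    using that f relpowp_fun_conv[where P=E and n=i and x=r and y="f i"] by (metis less_le_trans)
  have suf: "(E ^^ (d - i)) (f i) v" if "i \<le> d" for i
  proof -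
    have "\<forall>j<d-i. E (f (i+j)) (f (Suc (i+j)))" using f(3) that by auto
    then show ?thesis using f(2) that
      by (rule_tac iffD2[OF relpowp_fun_conv], rule_tac x="\<lambda>j. f (i+j)" in exI) auto
  qed
  have "dist E r (f i) = i" if "i \<le> d" for i
  proof (rule ccontr)
    assume ne: "dist E r (f i) \<noteq> i"
    have le: "dist E r (f i) \<le> i" using dist_le[OF pre[OF that]] .
    have "(E ^^ dist E r (f i)) r (f i)" using dist_path[OF pre[OF that]] .
    with suf[OF that] have "(E ^^ (dist E r (f i) + (d - i))) r v"
      by (auto simp: relpowp_add)
    then have "d \<le> dist E r (f i) + (d - i)" using dist_le d_def by metis
    with le ne that show False by linarith
  qed
  then show ?thesis using f d_def by auto
qed



lemma graph_sym: "graph V E \<Longrightarrow> E a b \<Longrightarrow> E b a"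
  unfolding graph_def by blast

lemma graph_irr: "graph V E \<Longrightarrow> E a b \<Longrightarrow> a \<noteq> b"
  unfolding graph_def by blast

lemma max_common:
  fixes f g :: "nat \<Rightarrow> 'a"
  assumes "f 0 = g 0" "f n \<noteq> g n"
  obtains k where "k < n" "f k = g k" "\<And>j. k < j \<Longrightarrow> j \<le> n \<Longrightarrow> f j \<noteq> g j"
proof -
  define K where "K = {j. j \<le> n \<and> f j = g j}"
  have fin: "finite K" unfolding K_def by auto
  have "0 \<in> K" using assms unfolding K_def by auto
  define k where "k = Max K"
  have "k \<in> K" using fin \<open>0 \<in> K\<close> k_def Max_in by blast
  then have "k \<le> n" "f k = g k" unfolding K_def by auto
  moreover have "k \<noteq> n" using \<open>f k = g k\<close> assms(2) by auto
  moreover have "f j \<noteq> g j" if "k < j" "j \<le> n" for j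
  proof
    assume "f j = g j"
    then have "j \<in> K" using that K_def by auto
    then have "j \<le> k" using Max_ge fin k_def by auto
    with that show False by simp
  qed
  ultimately show ?thesis by (intro that) auto
qed

lemma cycle_odd:
  assumes G: "graph V E"
    and f0: "f 0 = r" and g0: "g 0 = r"
    and fw: "\<forall>i<n. E (f i) (f (Suc i))" and gw: "\<forall>i<n. E (g i) (g (Suc i))"
    and fd: "\<forall>i\<le>n. dist E r (f i) = i" and gd: "\<forall>i\<le>n. dist E r (g i) = i"
    and ne: "f n \<noteq> g n" and e: "E (f n) (g n)"
  shows "\<exists>xs. is_cycle E xs"
proof -
  obtain k where k: "k < n" "f k = g k" "\<And>j. k < j \<Longrightarrow> j \<le> n \<Longrightarrow> f j \<noteq> g j"
    using max_common[of f g n] f0 g0 ne by metis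
  define s where "s = n - k"
  define len where "len = 2*s+1"
  define c where "c i = (if i \<le> s then f (k+i) else g (k + len - i))" for i
  have dc: "dist E r (c i) = (if i \<le> s then k+i else k+len-i)" if "i < len" for i
    using that fd gd k(1) unfolding c_def len_def s_def by auto
  have inj: "inj_on c {0..<len}"
  proof (rule inj_onI)
    fix i j assume i: "i \<in> {0..<len}" and j: "j \<in> {0..<len}" and cij: "c i = c j"
    have "dist E r (c i) = dist E r (c j)" using cij by simp
    then have dd: "(if i \<le> s then k+i else k+len-i) = (if j \<le> s then k+j else k+len-j)"
      using dc i j by auto
    show "i = j"
    proof (cases "i \<le> s")
      case True
      show ?thesis
      proof (cases "j \<le> s")
        case True then show ?thesis using \<open>i \<le> s\<close> dd by auto
      next
        case False
        define t where "t = k + i"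
        have "t = k + len - j" using dd True False t_def by auto
        then have "f t = g t" using cij True False t_def unfolding c_def by auto
        moreover have "k < t" "t \<le> n" using \<open>t = k + len - j\<close> False j t_def True
          unfolding len_def s_def by auto
        ultimately show ?thesis using k(3) by blast
      qed
    next
      case False
      show ?thesis
      proof (cases "j \<le> s")
        case True
        define t where "t = k + j"
        have "t = k + len - i" using dd True False t_def by auto
        then have "f t = g t" using cij True False t_def unfolding c_def by auto
        moreover have "k < t" "t \<le> n" using \<open>t = k + len - i\<close> False i t_def True
          unfolding len_def s_def by auto
        ultimately show ?thesis using k(3) by blast
      next
        case False then show ?thesis using \<open>\<not> i \<le> s\<close> dd i j by auto
      qed
    qed
  qed
  define xs where "xs = map c [0..<len]"
  have len3: "3 \<le> len" using k(1) unfolding len_def s_def by auto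
  have "is_cycle E xs"
    unfolding is_cycle_def
  proof (intro conjI allI impI)
    show "3 \<le> length xs" using len3 xs_def by simp
    show "distinct xs" using inj xs_def by (simp add: distinct_map)
  next
    fix i assume "Suc i < length xs"
    then have i: "Suc i < len" using xs_def by simp
    have "E (c i) (c (Suc i))"
    proof (cases "Suc i \<le> s")
      case True then show ?thesis using fw unfolding c_def s_def by auto
    next
      case False
      show ?thesis
      proof (cases "i = s")
        case True
        have "k + len - Suc i = n" using True k(1) unfolding len_def s_def by simp
        then have "c i = f n" "c (Suc i) = g n" using True k(1) unfolding c_def s_def by auto
        then show ?thesis using e by simp
      next
        case False
        define t where "t = k + len - Suc i"
        have "t < n" using False \<open>\<not> Suc i \<le> s\<close> t_def i unfolding len_def s_def by auto
        have "c i = g (Suc t)" "c (Suc i) = g t"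
          using False \<open>\<not> Suc i \<le> s\<close> t_def i unfolding c_def len_def s_def by (auto simp: Suc_diff_le)
        then show ?thesis using gw \<open>t < n\<close> graph_sym[OF G] by auto
      qed
    qed
    then show "E (xs ! i) (xs ! Suc i)" using xs_def i by simp
  next
    have "last xs = c (len - 1)" using xs_def len3 by (simp add: last_map)
    moreover have "c (len - 1) = g (Suc k)" unfolding c_def len_def s_def using k(1) by auto
    moreover have "hd xs = c 0" using xs_def len3 by (simp add: hd_map)
    moreover have "c 0 = g k" using k(2) unfolding c_def by simp
    ultimately show "E (last xs) (hd xs)" using gw k(1) graph_sym[OF G] by auto
  qed
  then show ?thesis by blast
qed

lemma cycle_even:
  assumes G: "graph V E"
    and f0: "f 0 = r" and g0: "g 0 = r"
    and fw: "\<forall>i<n. E (f i) (f (Suc i))" and gw: "\<forall>i<n. E (g i) (g (Suc i))"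
    and fd: "\<forall>i\<le>n. dist E r (f i) = i" and gd: "\<forall>i\<le>n. dist E r (g i) = i"
    and ne: "f n \<noteq> g n" and e1: "E (f n) v" and e2: "E (g n) v" and dv: "dist E r v = Suc n"
  shows "\<exists>xs. is_cycle E xs"
proof -
  obtain k where k: "k < n" "f k = g k" "\<And>j. k < j \<Longrightarrow> j \<le> n \<Longrightarrow> f j \<noteq> g j"
    using max_common[of f g n] f0 g0 ne by metis
  define s where "s = n - k"
  define len where "len = 2*s+2"
  define c where "c i = (if i \<le> s then f (k+i) else if i = Suc s then v else g (k + len - i))" for i
  have dc: "dist E r (c i) = (if i \<le> s then k+i else if i = Suc s then Suc n else k+len-i)" if "i < len" for i
    using that fd gd k(1) dv unfolding c_def len_def s_def by auto
  have mix: "False" if "a < len" "b < len" "a \<le> s" "\<not> b \<le> s" "b \<noteq> Suc s" "c a = c b" for a b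
  proof -
    have "k + a = k + len - b" using dc[OF that(1)] dc[OF that(2)] that by auto
    moreover have "f (k+a) = g (k + len - b)" using that unfolding c_def by auto
    ultimately have "f (k+a) = g (k+a)" by simp
    moreover have "k < k + a" "k + a \<le> n" using \<open>k + a = k + len - b\<close> that k(1)
      unfolding len_def s_def by auto
    ultimately show False using k(3) by blast
  qed
  have vv: "False" if "a < len" "b < len" "a \<noteq> Suc s" "b = Suc s" "c a = c b" for a b
  proof -
    have "dist E r (c b) = Suc n" using dc[OF that(2)] that by auto
    moreover have "dist E r (c a) \<le> n" using dc[OF that(1)] that k(1) unfolding len_def s_def by auto
    ultimately show False using that by auto
  qed
  have inj: "inj_on c {0..<len}"
  proof (rule inj_onI)
    fix i j assume i: "i \<in> {0..<len}" and j: "j \<in> {0..<len}" and cij: "c i = c j"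
    have "dist E r (c i) = dist E r (c j)" using cij by simp
    then have dd: "(if i \<le> s then k+i else if i = Suc s then Suc n else k+len-i) = (if j \<le> s then k+j else if j = Suc s then Suc n else k+len-j)"
      using dc i j by auto
    show "i = j"
    proof (cases "i \<le> s \<and> j \<le> s \<or> (\<not> i \<le> s \<and> i \<noteq> Suc s \<and> \<not> j \<le> s \<and> j \<noteq> Suc s) \<or> (i = Suc s \<and> j = Suc s)")
      case True then show ?thesis using dd i j by auto
    next
      case False
      have il: "i < len" and jl: "j < len" using i j by auto
      show ?thesis
      proof (cases "i = Suc s")
        case True then show ?thesis using vv[OF jl il _ True cij[symmetric]] by blast
      next
        case ni: False
        show ?thesis
        proof (cases "j = Suc s")
          case True then show ?thesis using vv[OF il jl ni True cij] by blast
        next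
          case nj: False
          show ?thesis
          proof (cases "i \<le> s")
            case True
            then have "\<not> j \<le> s" using False ni nj by blast
            then show ?thesis using mix[OF il jl True _ nj cij] by blast
          next
            case ns: False
            then have "j \<le> s" using False ni nj by blast
            then show ?thesis using mix[OF jl il _ ns ni cij[symmetric]] by blast
          qed
        qed
      qed
    qed
  qed
  define xs where "xs = map c [0..<len]"
  have len3: "3 \<le> len" using k(1) unfolding len_def s_def by auto
  have "is_cycle E xs"
    unfolding is_cycle_def
  proof (intro conjI allI impI)
    show "3 \<le> length xs" using len3 xs_def by simp
    show "distinct xs" using inj xs_def by (simp add: distinct_map)
  next
    fix i assume "Suc i < length xs"
    then have i: "Suc i < len" using xs_def by simp
    have "E (c i) (c (Suc i))"
    proof (cases "Suc i \<le> s")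
      case True then show ?thesis using fw unfolding c_def s_def by auto
    next
      case ns: False
      show ?thesis
      proof (cases "i = s")
        case True
        then have "c i = f n" "c (Suc i) = v" using k(1) unfolding c_def s_def by auto
        then show ?thesis using e1 by simp
      next
        case nis: False
        show ?thesis
        proof (cases "i = Suc s")
          case True
          have "k + len - Suc i = n" using True k(1) unfolding len_def s_def by simp
          then have "c i = v" "c (Suc i) = g n" using True unfolding c_def by auto
          then show ?thesis using e2 graph_sym[OF G] by simp
        next
          case False
          define t where "t = k + len - Suc i"
          have "t < n" using False nis ns t_def i unfolding len_def s_def by auto
          have "c i = g (Suc t)" "c (Suc i) = g t"
            using False nis ns t_def i unfolding c_def len_def s_def by (auto simp: Suc_diff_le)
          then show ?thesis using gw \<open>t < n\<close> graph_sym[OF G] by auto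
        qed
      qed
    qed
    then show "E (xs ! i) (xs ! Suc i)" using xs_def i by simp
  next
    have "last xs = c (len - 1)" using xs_def len3 by (simp add: last_map)
    moreover have "c (len - 1) = g (Suc k)" unfolding c_def len_def s_def using k(1) by auto
    moreover have "hd xs = c 0" using xs_def len3 by (simp add: hd_map)
    moreover have "c 0 = g k" using k(2) unfolding c_def by simp
    ultimately show "E (last xs) (hd xs)" using gw k(1) graph_sym[OF G] by auto
  qed
  then show ?thesis by blast
qed



lemma tree_graph: "tree V E \<Longrightarrow> graph V E" unfolding tree_def by simp

lemma tree_reach:
  assumes "tree V E" "r \<in> V" "v \<in> V" shows "\<exists>n. (E ^^ n) r v"
  using assms unfolding tree_def connected_graph_def by (simp add: rtranclp_power)

lemma tree_nocycle: "tree V E \<Longrightarrow> is_cycle E xs \<Longrightarrow> False"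
  unfolding tree_def by blast

lemma graph_V: "graph V E \<Longrightarrow> E a b \<Longrightarrow> a \<in> V \<and> b \<in> V"
  unfolding graph_def by blast

lemma edge_child:
  assumes T: "tree V E" and r: "r \<in> V" and e: "E a b"
  shows "child E r a b \<or> child E r b a"
proof -
  have G: "graph V E" using T tree_graph by blast
  have V: "a \<in> V" "b \<in> V" using graph_V[OF G e] by auto
  obtain na where na: "(E ^^ na) r a" using tree_reach[OF T r V(1)] by blast
  obtain nb where nb: "(E ^^ nb) r b" using tree_reach[OF T r V(2)] by blast
  have 1: "dist E r b \<le> Suc (dist E r a)" using dist_edge[OF na e] .
  have 2: "dist E r a \<le> Suc (dist E r b)" using dist_edge[OF nb graph_sym[OF G e]] .
  show ?thesis
  proof (cases "dist E r a = dist E r b")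
    case True
    obtain f where f: "f 0 = r" "f (dist E r a) = a" "\<forall>i<dist E r a. E (f i) (f (Suc i))"
      "\<forall>i\<le>dist E r a. dist E r (f i) = i" using shortest_path[OF na] by blast
    obtain g where g: "g 0 = r" "g (dist E r b) = b" "\<forall>i<dist E r b. E (g i) (g (Suc i))"
      "\<forall>i\<le>dist E r b. dist E r (g i) = i" using shortest_path[OF nb] by blast
    have "\<exists>xs. is_cycle E xs"
      apply (rule cycle_odd[OF G, where f=f and g=g and n="dist E r a" and r=r])
      using f g True graph_irr[OF G e] e by auto
    then show ?thesis using tree_nocycle[OF T] by blast
  next
    case False
    then have "dist E r b = Suc (dist E r a) \<or> dist E r a = Suc (dist E r b)" using 1 2 by linarith
    then show ?thesis unfolding child_def using e graph_sym[OF G e] by blast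
  qed
qed

lemma parent_unique:
  assumes T: "tree V E" and r: "r \<in> V" and p: "child E r p v" and q: "child E r q v"
  shows "p = q"
proof (rule ccontr)
  assume ne: "p \<noteq> q"
  have G: "graph V E" using T tree_graph by blast
  have V: "p \<in> V" "q \<in> V" using graph_V[OF G] p q unfolding child_def by auto
  obtain np where np: "(E ^^ np) r p" using tree_reach[OF T r V(1)] by blast
  obtain nq where nq: "(E ^^ nq) r q" using tree_reach[OF T r V(2)] by blast
  have dd: "dist E r p = dist E r q" using p q unfolding child_def by simp
  obtain f where f: "f 0 = r" "f (dist E r p) = p" "\<forall>i<dist E r p. E (f i) (f (Suc i))"
    "\<forall>i\<le>dist E r p. dist E r (f i) = i" using shortest_path[OF np] by blast
  obtain g where g: "g 0 = r" "g (dist E r q) = q" "\<forall>i<dist E r q. E (g i) (g (Suc i))"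
    "\<forall>i\<le>dist E r q. dist E r (g i) = i" using shortest_path[OF nq] by blast
  have "\<exists>xs. is_cycle E xs"
    apply (rule cycle_even[OF G, where f=f and g=g and n="dist E r p" and r=r and v=v])
    using f g dd ne p q unfolding child_def by auto
  then show False using tree_nocycle[OF T] by blast
qed

lemma parent_exists:
  assumes T: "tree V E" and r: "r \<in> V" and v: "v \<in> V" "v \<noteq> r"
  shows "\<exists>p. child E r p v"
proof -
  obtain n where n: "(E ^^ n) r v" using tree_reach[OF T r v(1)] by blast
  obtain f where f: "f 0 = r" "f (dist E r v) = v" "\<forall>i<dist E r v. E (f i) (f (Suc i))"
    "\<forall>i\<le>dist E r v. dist E r (f i) = i" using shortest_path[OF n] by blast
  have "dist E r v \<noteq> 0" using dist_zero[OF n] v(2) by metis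
  then obtain d where d: "dist E r v = Suc d" by (cases "dist E r v") auto
  have "child E r (f d) v" unfolding child_def using f d by auto
  then show ?thesis by blast
qed

lemma child_root: "child E r v r \<Longrightarrow> False"
  unfolding child_def using dist_self[of E r] by simp



lemma reconf_refl: "dominating V E A \<Longrightarrow> card A \<le> k \<Longrightarrow> reconf V E k A A"
  unfolding reconf_def by (rule exI[of _ 0], rule exI[of _ "\<lambda>_. A"]) auto

lemma reconf_step: "dominating V E A \<Longrightarrow> dominating V E B \<Longrightarrow> card A \<le> k \<Longrightarrow> card B \<le> k
  \<Longrightarrow> ds_adjacent A B \<Longrightarrow> reconf V E k A B"
  unfolding reconf_def
  apply (rule exI[of _ 1], rule exI[of _ "\<lambda>i. if i = 0 then A else B"])
  by (auto simp: le_Suc_eq)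

lemma reconf_trans:
  assumes "reconf V E k A B" "reconf V E k B C" shows "reconf V E k A C"
proof -
  obtain l f where f: "f 0 = A" "f l = B" "\<forall>i\<le>l. dominating V E (f i) \<and> card (f i) \<le> k"
    "\<forall>i<l. ds_adjacent (f i) (f (Suc i))" using assms(1) unfolding reconf_def by blast
  obtain m g where g: "g 0 = B" "g m = C" "\<forall>i\<le>m. dominating V E (g i) \<and> card (g i) \<le> k"
    "\<forall>i<m. ds_adjacent (g i) (g (Suc i))" using assms(2) unfolding reconf_def by blast
  define h where "h i = (if i \<le> l then f i else g (i - l))" for i
  have "h 0 = A" "h (l+m) = C" using f g h_def by auto
  moreover have "\<forall>i\<le>l+m. dominating V E (h i) \<and> card (h i) \<le> k"
    using f(3) g(3) h_def by auto
  moreover have "\<forall>i<l+m. ds_adjacent (h i) (h (Suc i))"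
  proof (intro allI impI)
    fix i assume i: "i < l + m"
    show "ds_adjacent (h i) (h (Suc i))"
    proof (cases "Suc i \<le> l")
      case True then show ?thesis using f(4) h_def by auto
    next
      case False
      then have li: "l \<le> i" by simp
      have "h i = g (i - l)" using h_def f(2) g(1) li by (cases "i = l") auto
      moreover have "h (Suc i) = g (Suc (i - l))" using h_def False li by (simp add: Suc_diff_le)
      ultimately have "h i = g (i - l)" "h (Suc i) = g (Suc (i - l))" by auto
      then show ?thesis using g(4) i False by auto
    qed
  qed
  ultimately show ?thesis unfolding reconf_def by blast
qed

lemma ds_adj_ins: "y \<notin> D \<Longrightarrow> ds_adjacent D (insert y D)"
  unfolding ds_adjacent_def by (subgoal_tac "(D - insert y D) \<union> (insert y D - D) = {y}") auto

lemma ds_adj_del: "x \<in> D \<Longrightarrow> ds_adjacent D (D - {x})"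
  unfolding ds_adjacent_def by (subgoal_tac "(D - (D - {x})) \<union> ((D - {x}) - D) = {x}") auto

lemma ite3: "x = (if A then 1 else if B then 2 else (3::nat)) \<Longrightarrow>
  (x = 1 \<longleftrightarrow> A) \<and> (x = 2 \<longleftrightarrow> \<not>A \<and> B) \<and> (x = 3 \<longleftrightarrow> \<not>A \<and> \<not>B)"
  by auto

lemma ite3r: "x = (if A then 1 else if B then 2 else (3::nat)) \<Longrightarrow> x = 1 \<or> x = 2 \<or> x = 3"
  by auto

lemma removal:
  assumes dom: "dominating V E D'"
    and hyp: "\<forall>z. (z = x \<or> E x z) \<longrightarrow> (z \<in> D' - {x} \<or> (\<exists>t\<in>D'-{x}. E t z))"
  shows "dominating V E (D' - {x})"
  using assms unfolding dominating_def by blast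

context
  fixes V :: "'a set" and E r and L :: "'a \<Rightarrow> nat"
  assumes T: "tree V E" and r: "r \<in> V" and deg: "degree E r = 1"
    and lab: "is_labeling V E r L"
begin

lemma G: "graph V E" using T tree_graph by blast

lemma child_V: "child E r a b \<Longrightarrow> a \<in> V \<and> b \<in> V"
  unfolding child_def using graph_V[OF G] by blast

lemma child_ne: "child E r a b \<Longrightarrow> a \<noteq> b"
  unfolding child_def using graph_irr[OF G] by blast

lemma root_child: obtains c where "{u. E r u} = {c}" "children E r r = {c}"
proof -
  have "card {u. E r u} = 1" using deg unfolding degree_def .
  then obtain c where c: "{u. E r u} = {c}" by (rule card_1_singletonE)
  have "E r c" using c by auto
  have "c \<in> V" using graph_V[OF G \<open>E r c\<close>] by auto
  obtain n where n: "(E ^^ n) r c" using tree_reach[OF T r \<open>c \<in> V\<close>] by blast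
  have "dist E r c \<le> 1" using dist_le[where n=1 and E=E and x=r and y=c] \<open>E r c\<close> by auto
  moreover have "dist E r c \<noteq> 0" using dist_zero[OF n] graph_irr[OF G \<open>E r c\<close>] by metis
  ultimately have "dist E r c = Suc (dist E r r)" using dist_self[of E r] by simp
  then have "children E r r = {c}" unfolding children_def child_def using c \<open>E r c\<close> by auto
  then show ?thesis using that c by blast
qed

lemma labnr0: "v \<in> V \<Longrightarrow> v \<noteq> r \<Longrightarrow> children E r v = {} \<Longrightarrow> L v = 1"
  using lab unfolding is_labeling_def by blast

lemma labeq: "v \<in> V \<Longrightarrow> v \<noteq> r \<Longrightarrow> children E r v \<noteq> {} \<Longrightarrow>
  L v = (if \<forall>u\<in>children E r v. L u = 3 then 1
                  else if \<exists>u\<in>children E r v. L u = 1 then 2 else 3)"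
  using lab unfolding is_labeling_def by blast

lemma labr: "children E r r = {c} \<Longrightarrow> L r = (if L c = 2 then 3 else 2)"
  using lab unfolding is_labeling_def by blast

lemma lab_range:
  assumes v: "v \<in> V" shows "L v = 1 \<or> L v = 2 \<or> L v = 3"
proof (cases "v = r")
  case True
  obtain c where c: "children E r r = {c}" by (rule root_child)
  have "L r = (if L c = 2 then 3 else 2)" using labr[OF c] .
  then have "L r = 2 \<or> L r = 3" by (cases "L c = 2") simp_all
  then show ?thesis using True by blast
next
  case False
  show ?thesis
  proof (cases "children E r v = {}")
    case True then show ?thesis using labnr0[OF v False] by simp
  next
    case ne: False
    show ?thesis by (rule ite3r[OF labeq[OF v False ne]])
  qed
qed

lemma lab1: "v \<noteq> r \<Longrightarrow> L v = 1 \<Longrightarrow> child E r v z \<Longrightarrow> L z = 3"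
proof -
  assume a: "v \<noteq> r" "L v = 1" "child E r v z"
  have "v \<in> V" using child_V[OF a(3)] by simp
  have zc: "z \<in> children E r v" using a(3) unfolding children_def by simp
  then have "children E r v \<noteq> {}" by blast
  note h = ite3[OF labeq[OF \<open>v \<in> V\<close> a(1) this]]
  have "\<forall>u\<in>children E r v. L u = 3" using iffD1[OF conjunct1[OF h] a(2)] .
  then show ?thesis using zc by blast
qed

lemma lab3: "v \<noteq> r \<Longrightarrow> L v = 3 \<Longrightarrow> child E r v z \<Longrightarrow> L z \<noteq> 1"
proof -
  assume a: "v \<noteq> r" "L v = 3" "child E r v z"
  have "v \<in> V" using child_V[OF a(3)] by simp
  have zc: "z \<in> children E r v" using a(3) unfolding children_def by simp
  then have "children E r v \<noteq> {}" by blast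
  note h = ite3[OF labeq[OF \<open>v \<in> V\<close> a(1) this]]
  have "\<not> (\<exists>u\<in>children E r v. L u = 1)" using iffD1[OF conjunct2[OF conjunct2[OF h]] a(2)] by (rule conjunct2)
  then show ?thesis using zc by blast
qed

lemma lab3ex: "v \<in> V \<Longrightarrow> v \<noteq> r \<Longrightarrow> L v = 3 \<Longrightarrow> \<exists>z. child E r v z \<and> L z = 2"
proof -
  assume a: "v \<in> V" "v \<noteq> r" "L v = 3"
  have ne: "children E r v \<noteq> {}" using labnr0[OF a(1,2)] a(3) by auto
  note h = ite3[OF labeq[OF a(1,2) ne]]
  have h3: "\<not> (\<forall>u\<in>children E r v. L u = 3) \<and> \<not> (\<exists>u\<in>children E r v. L u = 1)"
    using iffD1[OF conjunct2[OF conjunct2[OF h]] a(3)] .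
  then obtain u where u: "u \<in> children E r v" "L u \<noteq> 3" by blast
  have "L u \<noteq> 1" using h3 u(1) by blast
  have cu: "child E r v u" using u(1) unfolding children_def by simp
  have "u \<in> V" using child_V[OF cu] by simp
  then have "L u = 2" using lab_range u \<open>L u \<noteq> 1\<close> by blast
  then show ?thesis using cu by blast
qed

lemma lab2ex: "v \<in> V \<Longrightarrow> v \<noteq> r \<Longrightarrow> L v = 2 \<Longrightarrow> \<exists>z. child E r v z \<and> L z = 1"
proof -
  assume a: "v \<in> V" "v \<noteq> r" "L v = 2"
  have ne: "children E r v \<noteq> {}" using labnr0[OF a(1,2)] a(3) by auto
  note h = ite3[OF labeq[OF a(1,2) ne]]
  have "\<exists>u\<in>children E r v. L u = 1" using iffD1[OF conjunct1[OF conjunct2[OF h]] a(3)] by (rule conjunct2)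
  then show ?thesis unfolding children_def by auto
qed

lemma par1: "child E r p v \<Longrightarrow> L v = 1 \<Longrightarrow> L p = 2"
proof -
  assume a: "child E r p v" "L v = 1"
  have pV: "p \<in> V" using child_V[OF a(1)] by simp
  have vc: "v \<in> children E r p" using a(1) unfolding children_def by simp
  show ?thesis
  proof (cases "p = r")
    case True
    obtain c where c: "children E r r = {c}" by (rule root_child)
    then have "v = c" using vc True by auto
    then show ?thesis using labr[OF c] a(2) True by simp
  next
    case False
    have "children E r p \<noteq> {}" using vc by blast
    note h = ite3[OF labeq[OF pV False this]]
    have "\<not> (\<forall>u\<in>children E r p. L u = 3)" using vc a(2) by fastforce
    moreover have "\<exists>u\<in>children E r p. L u = 1" using vc a(2) by blast
    ultimately show ?thesis using iffD2[OF conjunct1[OF conjunct2[OF h]]] by blast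
  qed
qed

lemma V2_dom: "dominating V E {v \<in> V. L v = 2}"
  unfolding dominating_def
proof (intro conjI ballI)
  show "{v \<in> V. L v = 2} \<subseteq> V" by auto
next
  fix v assume v: "v \<in> V"
  have "L v = 1 \<or> L v = 2 \<or> L v = 3" using lab_range[OF v] .
  moreover
  { assume l1: "L v = 1"
    have "v \<noteq> r"
    proof
      assume "v = r"
      obtain c where "children E r r = {c}" by (rule root_child)
      then have "L r = (if L c = 2 then 3 else 2)" by (rule labr)
      then show False using \<open>v = r\<close> l1 by (cases "L c = 2") simp_all
    qed
    then obtain p where p: "child E r p v" using parent_exists[OF T r v] by blast
    then have "L p = 2" "p \<in> V" "E p v" using par1 l1 child_V unfolding child_def by auto
    then have "\<exists>u\<in>{v \<in> V. L v = 2}. E u v" by blast }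
  moreover
  { assume l3: "L v = 3"
    have "\<exists>z. E v z \<and> z \<in> V \<and> L z = 2"
    proof (cases "v = r")
      case True
      obtain c where c: "children E r r = {c}" by (rule root_child)
      then have "L c = 2" using labr[OF c] l3 True by (auto split: if_splits)
      moreover have "child E r r c" using c unfolding children_def by auto
      ultimately show ?thesis using True child_V unfolding child_def by blast
    next
      case False
      then show ?thesis using lab3ex[OF v False l3] child_V unfolding child_def by blast
    qed
    then have "\<exists>u\<in>{v \<in> V. L v = 2}. E u v" using graph_sym[OF G] by blast }
  ultimately show "v \<in> {v \<in> V. L v = 2} \<or> (\<exists>u\<in>{v \<in> V. L v = 2}. E u v)" using v by auto
qed


lemma xrem:
  assumes cx: "child E r p x"
    and lx: "L x = 1 \<or> L x = 3"
    and pg: "p \<in> D' - {x} \<or> (\<exists>t\<in>D'-{x}. E t p)"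
    and pD: "p \<in> D' \<or> L x = 3"
    and deep: "\<forall>z\<in>V. L z = 2 \<and> dist E r x < dist E r z \<longrightarrow> z \<in> D'"
  shows "\<forall>z. (z = x \<or> E x z) \<longrightarrow> (z \<in> D' - {x} \<or> (\<exists>t\<in>D'-{x}. E t z))"
proof -
  have xr: "x \<noteq> r" using cx child_root by metis
  have xV: "x \<in> V" using child_V[OF cx] by simp
  have good3: "\<exists>t\<in>D'-{x}. E t w" if w: "w \<in> V" "w \<noteq> r" "L w = 3" "dist E r x \<le> dist E r w" for w
  proof -
    obtain z where z: "child E r w z" "L z = 2" using lab3ex[OF w(1-3)] by blast
    have "z \<in> V" using child_V[OF z(1)] by simp
    moreover have "dist E r x < dist E r z" using z(1) w(4) unfolding child_def by simp
    ultimately have "z \<in> D'" using deep z(2) by blast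
    moreover have "z \<noteq> x" using z(2) lx by auto
    moreover have "E z w" using z(1) graph_sym[OF G] unfolding child_def by blast
    ultimately show ?thesis by blast
  qed
  show ?thesis
  proof (intro allI impI)
    fix z assume z: "z = x \<or> E x z"
    show "z \<in> D' - {x} \<or> (\<exists>t\<in>D'-{x}. E t z)"
    proof (cases "z = x")
      case True
      show ?thesis
      proof (cases "p \<in> D'")
        case True
        have "p \<noteq> x" using child_ne[OF cx] .
        moreover have "E p x" using cx unfolding child_def by simp
        ultimately show ?thesis using True \<open>z = x\<close> by blast
      next
        case False
        then have "L x = 3" using pD by simp
        then show ?thesis using good3[OF xV xr] \<open>z = x\<close> by blast
      qed
    next
      case False
      then have e: "E x z" using z by simp
      have "child E r x z \<or> child E r z x" using edge_child[OF T r e] .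
      then show ?thesis
      proof
        assume c: "child E r x z"
        have zV: "z \<in> V" using child_V[OF c] by simp
        have zr: "z \<noteq> r" using c child_root by metis
        have "L z \<noteq> 1"
        proof (cases "L x = 1")
          case True then show ?thesis using lab1[OF xr True c] by simp
        next
          case False then have "L x = 3" using lx by simp
          then show ?thesis using lab3[OF xr _ c] by simp
        qed
        then have "L z = 2 \<or> L z = 3" using lab_range[OF zV] by simp
        then show ?thesis
        proof
          assume "L z = 2"
          moreover have "dist E r x < dist E r z" using c unfolding child_def by simp
          ultimately have "z \<in> D'" using deep zV by blast
          then show ?thesis using child_ne[OF c] by blast
        next
          assume "L z = 3"
          moreover have "dist E r x \<le> dist E r z" using c unfolding child_def by simp
          ultimately show ?thesis using good3[OF zV zr] by blast
        qed
      next
        assume c: "child E r z x"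
        then have "z = p" using parent_unique[OF T r c cx] by simp
        then show ?thesis using pg by simp
      qed
    qed
  qed
qed

lemma dom_ins: "dominating V E D \<Longrightarrow> y \<in> V \<Longrightarrow> dominating V E (insert y D)"
  unfolding dominating_def by blast

lemma swap:
  assumes dom: "dominating V E D" and y: "y \<in> V" "L y = 2" "y \<notin> D"
    and ymax: "\<forall>z\<in>V. L z = 2 \<and> z \<notin> D \<longrightarrow> dist E r z \<le> dist E r y"
  shows "\<exists>x\<in>D. L x \<noteq> 2 \<and> dominating V E (insert y D - {x})"
proof -
  define D' where "D' = insert y D"
  have domD': "dominating V E D'" using dom_ins[OF dom y(1)] D'_def by simp
  have deepg: "\<forall>z\<in>V. L z = 2 \<and> dist E r x < dist E r z \<longrightarrow> z \<in> D'"
    if "dist E r y < dist E r x" for x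
    using ymax that D'_def by fastforce
  show ?thesis
  proof (cases "y = r")
    case False
    obtain u where u: "child E r y u" "L u = 1" using lab2ex[OF y(1) False y(2)] by blast
    have uV: "u \<in> V" using child_V[OF u(1)] by simp
    have ur: "u \<noteq> r" using u(1) child_root by metis
    show ?thesis
    proof (cases "u \<in> D")
      case True
      have "y \<noteq> u" using child_ne[OF u(1)] .
      have "\<forall>z. (z = u \<or> E u z) \<longrightarrow> (z \<in> D' - {u} \<or> (\<exists>t\<in>D'-{u}. E t z))"
        apply (rule xrem[OF u(1)])
        using u(2) \<open>y \<noteq> u\<close> D'_def deepg[of u] u(1) unfolding child_def by auto
      then have "dominating V E (D' - {u})" using removal[OF domD'] by blast
      then show ?thesis using True u(2) D'_def by (intro bexI[of _ u]) auto
    next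
      case False
      obtain t where t: "t \<in> D" "E t u" using dom False uV unfolding dominating_def by blast
      have "child E r t u \<or> child E r u t" using edge_child[OF T r t(2)] .
      moreover have "\<not> child E r t u"
      proof
        assume "child E r t u"
        then have "t = y" using parent_unique[OF T r _ u(1)] by simp
        then show False using t(1) y(3) by simp
      qed
      ultimately have ct: "child E r u t" by simp
      have lt: "L t = 3" using lab1[OF ur u(2) ct] .
      have "y \<noteq> t" using t(1) y(3) by auto
      have "\<forall>z. (z = t \<or> E t z) \<longrightarrow> (z \<in> D' - {t} \<or> (\<exists>t'\<in>D'-{t}. E t' z))"
        apply (rule xrem[OF ct])
        using lt \<open>y \<noteq> t\<close> D'_def deepg[of t] u(1) ct unfolding child_def by auto
      then have "dominating V E (D' - {t})" using removal[OF domD'] by blast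
      then show ?thesis using t(1) lt D'_def by (intro bexI[of _ t]) auto
    qed
  next
    case True
    obtain c where c1: "{u. E r u} = {c}" and c2: "children E r r = {c}" by (rule root_child)
    have cc: "child E r r c" using c2 unfolding children_def by auto
    have cV: "c \<in> V" using child_V[OF cc] by simp
    have "L r = (if L c = 2 then 3 else 2)" using labr[OF c2] .
    then have "L c \<noteq> 2" using y(2) True by (cases "L c = 2") simp_all
    then have lc: "L c = 1 \<or> L c = 3" using lab_range[OF cV] by simp
    obtain t where t: "t \<in> D" "E t r" using dom True y unfolding dominating_def by blast
    have "E r t" using graph_sym[OF G t(2)] .
    then have "t = c" using c1 by auto
    then have cD: "c \<in> D" using t(1) by simp
    have "r \<noteq> c" using child_ne[OF cc] .
    have "\<forall>z. (z = c \<or> E c z) \<longrightarrow> (z \<in> D' - {c} \<or> (\<exists>t'\<in>D'-{c}. E t' z))"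
      apply (rule xrem[OF cc lc])
      using \<open>r \<noteq> c\<close> D'_def deepg[of c] True cc unfolding child_def by auto
    then have "dominating V E (D' - {c})" using removal[OF domD'] by blast
    then show ?thesis using cD \<open>L c \<noteq> 2\<close> D'_def True by (intro bexI[of _ c]) auto
  qed
qed

lemma main:
  "\<forall>D. dominating V E D \<longrightarrow> card D \<le> K \<longrightarrow>
     card ((D - {v \<in> V. L v = 2}) \<union> ({v \<in> V. L v = 2} - D)) = n \<longrightarrow>
     reconf V E (Suc K) D {v \<in> V. L v = 2}"
proof (induction n rule: less_induct)
  case (less n)
  define S2 where "S2 = {v \<in> V. L v = 2}"
  have finV: "finite V" using G unfolding graph_def by simp
  have S2V: "S2 \<subseteq> V" using S2_def by auto
  have domS2: "dominating V E S2" using V2_dom S2_def by simp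
  show ?case unfolding S2_def[symmetric]
  proof (intro allI impI)
    fix D assume dom: "dominating V E D" and cK: "card D \<le> K"
      and cn: "card ((D - S2) \<union> (S2 - D)) = n"
    have DV: "D \<subseteq> V" using dom unfolding dominating_def by simp
    have finD: "finite D" using finV DV finite_subset by blast
    have finsd: "finite ((D' - S2) \<union> (S2 - D'))" if "D' \<subseteq> V" for D'
      using finV that S2V by (meson finite_Diff finite_UnI finite_subset)
    show "reconf V E (Suc K) D S2"
    proof (cases "D = S2")
      case True then show ?thesis using reconf_refl[OF dom] cK by simp
    next
      case ne: False
      show ?thesis
      proof (cases "S2 \<subseteq> D")
        case True
        then obtain x where x: "x \<in> D" "x \<notin> S2" using ne by blast
        define D1 where "D1 = D - {x}"
        have dom1: "dominating V E D1" using domS2 True x DV unfolding D1_def dominating_def by blast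
        have c1: "card D1 \<le> K" using cK finD x(1) unfolding D1_def by (simp add: card_Diff_singleton)
        have "(D1 - S2) \<union> (S2 - D1) \<subset> (D - S2) \<union> (S2 - D)" using x True unfolding D1_def by blast
        then have "card ((D1 - S2) \<union> (S2 - D1)) < n" using cn finsd[OF DV] psubset_card_mono by metis
        then have r1: "reconf V E (Suc K) D1 S2" using less.IH dom1 c1 unfolding S2_def by blast
        have "reconf V E (Suc K) D D1"
          using reconf_step[OF dom dom1] cK c1 ds_adj_del[OF x(1)] unfolding D1_def by simp
        then show ?thesis using reconf_trans r1 by blast
      next
        case False
        then have nemp: "S2 - D \<noteq> {}" by blast
        have finM: "finite (dist E r ` (S2 - D))" using finV S2V by (meson finite_Diff finite_imageI finite_subset)
        define m where "m = Max (dist E r ` (S2 - D))"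
        have "m \<in> dist E r ` (S2 - D)" using Max_in[OF finM] nemp m_def by blast
        then obtain y where y: "y \<in> S2 - D" "dist E r y = m" by blast
        have ymax: "\<forall>z\<in>V. L z = 2 \<and> z \<notin> D \<longrightarrow> dist E r z \<le> dist E r y"
          using Max_ge[OF finM] y(2) m_def S2_def by auto
        have yV: "y \<in> V" "L y = 2" "y \<notin> D" using y(1) S2_def by auto
        obtain x where x: "x \<in> D" "L x \<noteq> 2" and dom2: "dominating V E (insert y D - {x})"
          using swap[OF dom yV ymax] by blast
        define D1 where "D1 = insert y D"
        define D2 where "D2 = D1 - {x}"
        have dom1: "dominating V E D1" using dom_ins[OF dom yV(1)] D1_def by simp
        have "x \<noteq> y" using x(1) yV(3) by auto
        have c1: "card D1 \<le> Suc K" using cK finD yV(3) unfolding D1_def by simp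
        have c2: "card D2 \<le> K" using cK finD yV(3) x(1) \<open>x \<noteq> y\<close> unfolding D2_def D1_def
          by (simp add: card_Diff_singleton)
        have xS: "x \<notin> S2" using x(2) S2_def by simp
        have "(D2 - S2) \<union> (S2 - D2) \<subset> (D - S2) \<union> (S2 - D)"
          using x(1) xS y(1) \<open>x \<noteq> y\<close> unfolding D2_def D1_def by blast
        moreover have "D2 \<subseteq> V" using dom2 unfolding D2_def D1_def dominating_def by simp
        ultimately have "card ((D2 - S2) \<union> (S2 - D2)) < n" using cn finsd[OF DV] psubset_card_mono by metis
        then have r2: "reconf V E (Suc K) D2 S2"
          using less.IH dom2 c2 unfolding S2_def D2_def D1_def by blast
        have s1: "reconf V E (Suc K) D D1"
          using reconf_step[OF dom dom1] cK c1 ds_adj_ins[OF yV(3)] unfolding D1_def by simp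
        have s2: "reconf V E (Suc K) D1 D2"
          using reconf_step[OF dom1] dom2 c1 c2 ds_adj_del[of x D1] x(1) unfolding D2_def D1_def by simp
        show ?thesis using reconf_trans[OF s1 reconf_trans[OF s2 r2]] .
      qed
    qed
  qed
qed

end

theorem lemma10:
  fixes V :: "'a set" and E :: "'a \<Rightarrow> 'a \<Rightarrow> bool" and r :: 'a
    and L :: "'a \<Rightarrow> nat" and D :: "'a set"
  assumes "tree V E" and "card V \<ge> 2" and "r \<in> V" and "degree E r = 1"
    and "is_labeling V E r L"
    and "dominating V E D"
  shows "reconf V E (card D + 1) D {v \<in> V. L v = 2}"
  using main[OF assms(1,3,4,5), of "card D"] assms(6) by simp


end
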